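(* Let $A_1,\dots,A_k,A$ be formulas of $\mathcal{L}_\infty$ and $m_1,\dots,m_k,n$ natural numbers such that $\Box_{m_i}A_i$ ($1\le i\le k$) and $\Box_nA$ are formulas of $\mathcal{L}_\infty$. (i) If $\bigwedge_{i=1}^k\Box_{m_i}A_i\vdash_{\mathbf{K4}_h}A$ and $m_i\le n$ for all $i$, then $\bigwedge_{i=1}^k\Box_{m_i}A_i\vdash_{\mathbf{K4}_h}\Box_nA$. (ii) If $\bigwedge_{i=1}^k\Box_{m_i}A_i\vdash_{\mathbf{S4}_h}A$ and $m_i\le n$ for all $i$, then $\bigwedge_{i=1}^k\Box_{m_i}A_i\vdash_{\mathbf{S4}_h}\Box_nA$.
   Context: The language $\mathcal{L}_\infty$ consists of modal formulas built from propositional atoms, $\bot,\top$, the connectives $\neg,\wedge,\vee,\rightarrow$ and unary modalities $\Box_n$ ($n\in\mathbb{N}$), with the restriction that $\Box_n A$ is a formula only if $n$ is strictly greater than the index of every box occurring in $A$. All formulas are in $\mathcal{L}_\infty$; axiom instances are only those that are $\mathcal{L}_\infty$-formulas. Axiom schemes (for all $n\ge0$): $\mathbf{H}$: $\Box_n A\rightarrow\Box_{n+1}A$; $\mathbf{K}_h$: $\Box_n(A\rightarrow B)\rightarrow(\Box_nA\rightarrow\Box_nB)$; $\mathbf{4}_h$: $\Box_nA\rightarrow\Box_{n+1}\Box_nA$; $\mathbf{T}_h$: $\Box_nA\rightarrow A$. For a set $X$ of schemes, $L(X)$ is the least set of $\mathcal{L}_\infty$-formulas containing all classical propositional tautologies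 and all instances of the schemes in $X$, closed under modus ponens and the rule: from $A$ infer $\Box_nA$ for any $n$ greater than all box indices in $A$. $\mathbf{K4}_h=L(\mathbf{H},\mathbf{K}_h,\mathbf{4}_h)$, $\mathbf{S4}_h=L(\mathbf{H},\mathbf{K}_h,\mathbf{4}_h,\mathbf{T}_h)$. For a set $\Gamma$ of formulas, $\Gamma\vdash_{L}A$ means there is a finite $\Delta\subseteq\Gamma$ with $\bigwedge\Delta\rightarrow A\in L$. *)

theory Defs
  imports Main
begin

datatype fm = Atom nat | Bot | Top | Neg fm | And fm fm | Or fm fm | Imp fm fm | Box nat fm

fun boxidx :: "fm \<Rightarrow> nat set" where
  "boxidx (Atom p) = {}"
| "boxidx Bot = {}"
| "boxidx Top = {}"
| "boxidx (Neg A) = boxidx A"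
| "boxidx (And A B) = boxidx A \<union> boxidx B"
| "boxidx (Or A B) = boxidx A \<union> boxidx B"
| "boxidx (Imp A B) = boxidx A \<union> boxidx B"
| "boxidx (Box n A) = insert n (boxidx A)"

text \<open>Membership in the language L_infinity.\<close>
fun wf :: "fm \<Rightarrow> bool" where
  "wf (Atom p) = True"
| "wf Bot = True"
| "wf Top = True"
| "wf (Neg A) = wf A"
| "wf (And A B) = (wf A \<and> wf B)"
| "wf (Or A B) = (wf A \<and> wf B)"
| "wf (Imp A B) = (wf A \<and> wf B)"
| "wf (Box n A) = (wf A \<and> (\<forall>m\<in>boxidx A. m < n))"

fun peval :: "(fm \<Rightarrow> bool) \<Rightarrow> fm \<Rightarrow> bool" where
  "peval v (Atom p) = v (Atom p)"
| "peval v Bot = False"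
| "peval v Top = True"
| "peval v (Neg A) = (\<not> peval v A)"
| "peval v (And A B) = (peval v A \<and> peval v B)"
| "peval v (Or A B) = (peval v A \<or> peval v B)"
| "peval v (Imp A B) = (peval v A \<longrightarrow> peval v B)"
| "peval v (Box n A) = v (Box n A)"

definition taut :: "fm \<Rightarrow> bool" where
  "taut A \<longleftrightarrow> (\<forall>v. peval v A)"

inductive hlog :: "bool \<Rightarrow> fm \<Rightarrow> bool" for t :: bool where
  tautI: "wf A \<Longrightarrow> taut A \<Longrightarrow> hlog t A"
| axH: "wf (Box (Suc n) A) \<Longrightarrow> hlog t (Imp (Box n A) (Box (Suc n) A))"
| axK: "wf (Imp (Box n (Imp A B)) (Imp (Box n A) (Box n B))) \<Longrightarrow>
        hlog t (Imp (Box n (Imp A B)) (Imp (Box n A) (Box n B)))"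
| ax4: "wf (Box (Suc n) (Box n A)) \<Longrightarrow> hlog t (Imp (Box n A) (Box (Suc n) (Box n A)))"
| axT: "t \<Longrightarrow> wf (Box n A) \<Longrightarrow> hlog t (Imp (Box n A) A)"
| mp: "hlog t (Imp A B) \<Longrightarrow> hlog t A \<Longrightarrow> hlog t B"
| nec: "hlog t A \<Longrightarrow> (\<forall>m\<in>boxidx A. m < n) \<Longrightarrow> hlog t (Box n A)"

abbreviation K4h :: "fm \<Rightarrow> bool" where "K4h \<equiv> hlog False"
abbreviation S4h :: "fm \<Rightarrow> bool" where "S4h \<equiv> hlog True"

definition conj :: "fm list \<Rightarrow> fm" where
  "conj ds = foldr And ds Top"

definition derives :: "(fm \<Rightarrow> bool) \<Rightarrow> fm set \<Rightarrow> fm \<Rightarrow> bool" where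
  "derives L \<Gamma> A \<longleftrightarrow> (\<exists>ds. set ds \<subseteq> \<Gamma> \<and> L (Imp (conj ds) A))"

end

theory Submission
  imports Defs
begin

fun tr :: "bool \<Rightarrow> nat \<Rightarrow> fm \<Rightarrow> fm" where
  "tr t n (Atom p) = Atom p"
| "tr t n Bot = Bot"
| "tr t n Top = Top"
| "tr t n (Neg A) = Neg (tr t n A)"
| "tr t n (And A B) = And (tr t n A) (tr t n B)"
| "tr t n (Or A B) = Or (tr t n A) (tr t n B)"
| "tr t n (Imp A B) = Imp (tr t n A) (tr t n B)"
| "tr t n (Box k A) = (if n \<le> k then (if t then tr t n A else Top)
     else if (\<forall>m\<in>boxidx A. m < k) then Box k (tr t n A) else Bot)"

lemma tr_id: "wf X \<Longrightarrow> (\<forall>m\<in>boxidx X. m < n) \<Longrightarrow> tr t n X = X"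
  by (induction X) auto

lemma boxidx_tr: "boxidx (tr t n X) \<subseteq> boxidx X"
  by (induction X) auto

lemma wf_tr: "wf (tr t n X)"
  by (induction X) (use boxidx_tr in fastforce)+

definition tv :: "bool \<Rightarrow> nat \<Rightarrow> (fm \<Rightarrow> bool) \<Rightarrow> fm \<Rightarrow> bool" where
  "tv t n v Y = (case Y of Box k Z \<Rightarrow> (if n \<le> k then (if t then peval v (tr t n Z) else True)
       else if (\<forall>m\<in>boxidx Z. m < k) then v (Box k (tr t n Z)) else False) | _ \<Rightarrow> v Y)"

lemma peval_tr: "peval v (tr t n X) = peval (tv t n v) X"
  by (induction X) (auto simp: tv_def)

lemma taut_tr: "taut X \<Longrightarrow> taut (tr t n X)"
  unfolding taut_def by (simp add: peval_tr)


lemma tautI': "wf A \<Longrightarrow> taut A \<Longrightarrow> hlog t A" by (rule tautI)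

lemma hlog_tr: "hlog t X \<Longrightarrow> hlog t (tr t n X)"
proof (induction rule: hlog.induct)
  case (tautI A)
  then show ?case by (intro hlog.tautI wf_tr taut_tr)
next
  case (axH k A)
  have w: "wf (tr t n A)" by (rule wf_tr)
  have bi: "\<forall>m\<in>boxidx (tr t n A). m < Suc k" using axH boxidx_tr by fastforce
  show ?case
  proof (cases "Suc k < n")
    case True
    show ?thesis
    proof (cases "\<forall>m\<in>boxidx A. m < k")
      case True2: True
      then have "\<forall>m\<in>boxidx (tr t n A). m < k" using boxidx_tr by fastforce
      then show ?thesis using w bi True True2 axH by (auto intro!: hlog.axH)
    next
      case False
      then show ?thesis using w bi True axH by (auto intro!: hlog.tautI simp: taut_def)
    qed
  next
    case False
    show ?thesis
    proof (cases "n \<le> k")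
      case True then show ?thesis using w by (auto intro!: hlog.tautI simp: taut_def)
    next
      case False2: False
      then have nk: "n = Suc k" using False by auto
      show ?thesis
      proof (cases "\<forall>m\<in>boxidx A. m < k")
        case True
        then have "\<forall>m\<in>boxidx (tr t n A). m < k" using boxidx_tr by fastforce
        then show ?thesis using w nk True
          by (cases t) (auto intro!: hlog.tautI hlog.axT simp: taut_def)
      next
        case False
        then show ?thesis using w nk
          by (cases t) (auto intro!: hlog.tautI simp: taut_def)
      qed
    qed
  qed
next
  case (axK k A B)
  have w: "wf (tr t n A)" "wf (tr t n B)" by (rule wf_tr)+
  have bi: "\<forall>m\<in>boxidx (tr t n A) \<union> boxidx (tr t n B). m < k" using axK boxidx_tr by fastforce
  show ?case
  proof (cases "n \<le> k")
    case True then show ?thesis using w by (cases t) (auto intro!: hlog.tautI simp: taut_def)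
  next
    case False
    have "hlog t (Imp (Box k (Imp (tr t n A) (tr t n B))) (Imp (Box k (tr t n A)) (Box k (tr t n B))))"
      using w bi by (intro hlog.axK) auto
    then show ?thesis using False axK by simp
  qed
next
  case (ax4 k A)
  have w: "wf (tr t n A)" by (rule wf_tr)
  have bi: "\<forall>m\<in>boxidx (tr t n A). m < k" using ax4 boxidx_tr by fastforce
  show ?case
  proof (cases "Suc k < n")
    case True
    have "hlog t (Imp (Box k (tr t n A)) (Box (Suc k) (Box k (tr t n A))))"
      using w bi by (intro hlog.ax4) auto
    then show ?thesis using True ax4 by simp
  next
    case False
    then show ?thesis using w bi ax4
      by (cases t) (auto intro!: hlog.tautI simp: taut_def)
  qed
next
  case (axT k A)
  have w: "wf (tr t n A)" by (rule wf_tr)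
  have bi: "\<forall>m\<in>boxidx (tr t n A). m < k" using axT boxidx_tr by fastforce
  show ?case
  proof (cases "n \<le> k")
    case True then show ?thesis using w axT by (auto intro!: hlog.tautI simp: taut_def)
  next
    case False then show ?thesis using w bi axT by (auto intro!: hlog.axT)
  qed
next
  case (mp A B)
  then show ?case by (auto intro: hlog.mp)
next
  case (nec A k)
  show ?case
  proof (cases "n \<le> k")
    case True then show ?thesis using nec by (cases t) (auto intro!: hlog.tautI simp: taut_def)
  next
    case False
    then show ?thesis using nec boxidx_tr[of t n A] by (auto intro!: hlog.nec)
  qed
qed

lemma peval_conj: "peval v (conj xs) = (\<forall>x\<in>set xs. peval v x)"
  by (induction xs) (auto simp: conj_def)

lemma wf_conj: "wf (conj xs) = (\<forall>x\<in>set xs. wf x)"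
  by (induction xs) (auto simp: conj_def)

lemma boxidx_conj: "boxidx (conj xs) = (\<Union>x\<in>set xs. boxidx x)"
  by (induction xs) (auto simp: conj_def)

lemma tr_conj: "tr t n (conj xs) = conj (map (tr t n) xs)"
  by (induction xs) (auto simp: conj_def)

lemma prop_lem:
  assumes "wf P" "\<forall>X\<in>set Xs. wf X \<and> hlog t (Imp P X)" "wf Y" "taut (Imp (conj Xs) Y)"
  shows "hlog t (Imp P Y)"
  using assms
proof (induction Xs arbitrary: Y)
  case Nil
  then show ?case by (intro hlog.tautI) (auto simp: taut_def conj_def)
next
  case (Cons X Xs)
  have "hlog t (Imp P (Imp X Y))"
    using Cons by (intro Cons.IH) (auto simp: taut_def conj_def)
  moreover have "hlog t (Imp P X)" using Cons by auto
  moreover have "hlog t (Imp (Imp P (Imp X Y)) (Imp (Imp P X) (Imp P Y)))"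
    using Cons by (intro hlog.tautI) (auto simp: taut_def)
  ultimately show ?case by (meson hlog.mp)
qed

lemma weaken: "hlog t X \<Longrightarrow> wf P \<Longrightarrow> wf X \<Longrightarrow> hlog t (Imp P X)"
  by (rule hlog.mp[of t X], rule hlog.tautI) (auto simp: taut_def)

fun imps :: "fm list \<Rightarrow> fm \<Rightarrow> fm" where
  "imps [] A = A"
| "imps (q # Q) A = Imp q (imps Q A)"

lemma peval_imps: "peval v (imps Q A) = ((\<forall>q\<in>set Q. peval v q) \<longrightarrow> peval v A)"
  by (induction Q) auto

lemma wf_imps: "wf (imps Q A) = ((\<forall>q\<in>set Q. wf q) \<and> wf A)"
  by (induction Q) auto

lemma boxidx_imps: "boxidx (imps Q A) = (\<Union>q\<in>set Q. boxidx q) \<union> boxidx A"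
  by (induction Q) auto

lemma distrib:
  assumes "hlog t (Imp C (Box n (imps Q A)))" "\<forall>q\<in>set Q. hlog t (Imp C (Box n q))" "wf C"
    "wf (Box n (imps Q A))"
  shows "hlog t (Imp C (Box n A))"
  using assms
proof (induction Q)
  case Nil then show ?case by simp
next
  case (Cons q Q)
  let ?R = "imps Q A"
  have w1: "wf (Box n (Imp q ?R))" using Cons(5) by simp
  let ?K = "Imp (Box n (Imp q ?R)) (Imp (Box n q) (Box n ?R))"
  have K: "hlog t ?K"
    using w1 by (intro hlog.axK) auto
  have wK: "wf ?K" using w1 by auto
  have "hlog t (Imp C (Box n ?R))"
  proof (rule prop_lem[where Xs = "[Box n (Imp q ?R), Box n q, ?K]"])
    show "wf C" by fact
    show "\<forall>X\<in>set [Box n (Imp q ?R), Box n q, ?K].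
          wf X \<and> hlog t (Imp C X)"
      using Cons(2,3) weaken[OF K Cons(4) wK] wK w1 by auto
    show "wf (Box n ?R)" using w1 by auto
    show "taut (Imp (conj [Box n (Imp q ?R), Box n q, ?K]) (Box n ?R))"
      by (auto simp: taut_def conj_def)
  qed
  then show ?case using Cons w1 by auto
qed

lemma Hchain: "j \<le> k \<Longrightarrow> wf (Box j X) \<Longrightarrow> hlog t (Imp (Box j X) (Box k X))"
proof (induction k)
  case 0 then show ?case by (auto intro!: hlog.tautI simp: taut_def)
next
  case (Suc k)
  show ?case
  proof (cases "j = Suc k")
    case True then show ?thesis using Suc by (auto intro!: hlog.tautI simp: taut_def)
  next
    case False
    then have ih: "hlog t (Imp (Box j X) (Box k X))"
      using Suc by (intro Suc.IH) auto
    have h: "hlog t (Imp (Box k X) (Box (Suc k) X))" using Suc False by (intro hlog.axH) auto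
    have "hlog t (Imp (Imp (Box j X) (Box k X)) (Imp (Imp (Box k X) (Box (Suc k) X)) (Imp (Box j X) (Box (Suc k) X))))"
      using Suc False by (intro hlog.tautI) (auto simp: taut_def)
    then show ?thesis using ih h by (meson hlog.mp)
  qed
qed

lemma main:
  fixes ps :: "(nat \<times> fm) list"
  assumes a1: "\<forall>(m, B) \<in> set ps. wf (Box m B)"
    and a2: "wf (Box n A)"
    and a3: "\<forall>(m, B) \<in> set ps. m \<le> n"
    and d: "derives (hlog t) {conj (map (\<lambda>(m, B). Box m B) ps)} A"
  shows "derives (hlog t) {conj (map (\<lambda>(m, B). Box m B) ps)} (Box n A)"
proof -
  define C where "C = conj (map (\<lambda>(m, B). Box m B) ps)"
  have wC: "wf C" using a1 by (auto simp: C_def wf_conj)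
  have wA: "wf A" using a2 by simp
  have An: "\<forall>m\<in>boxidx A. m < n" using a2 by simp
  obtain ds where ds: "set ds \<subseteq> {C}" "hlog t (Imp (conj ds) A)"
    using d unfolding derives_def C_def by auto
  have wds: "wf (conj ds)" using ds wC by (auto simp: wf_conj)
  have CA: "hlog t (Imp C A)"
  proof (rule prop_lem[where Xs = "[C, Imp (conj ds) A]"])
    have "hlog t (Imp C C)" using wC by (intro hlog.tautI) (auto simp: taut_def)
    then show "\<forall>X\<in>set [C, Imp (conj ds) A]. wf X \<and> hlog t (Imp C X)"
      using ds wC wA wds weaken by auto
    show "taut (Imp (conj [C, Imp (conj ds) A]) A)"
      using ds(1) unfolding taut_def by (auto simp: peval_conj)
  qed (use wC wA in auto)
  define Q where "Q = map (tr t n) (map (\<lambda>(m, B). Box m B) ps)"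
  have "hlog t (tr t n (Imp C A))" using CA by (rule hlog_tr)
  then have QA: "hlog t (Imp (conj Q) A)"
    using tr_id[OF wA An] by (simp add: C_def Q_def tr_conj)
  have wQ: "\<forall>q\<in>set Q. wf q" using a1 wf_tr by (auto simp: Q_def)
  have bQ: "\<forall>q\<in>set Q. \<forall>m\<in>boxidx q. m < n"
  proof
    fix q assume "q \<in> set Q"
    then obtain m B where mB: "(m, B) \<in> set ps" "q = tr t n (Box m B)" by (auto simp: Q_def)
    then have mn: "m \<le> n" and wB: "wf (Box m B)" using a1 a3 by auto
    have s: "boxidx (tr t n B) \<subseteq> boxidx B" by (rule boxidx_tr)
    show "\<forall>k\<in>boxidx q. k < n"
    proof
      fix k assume k: "k \<in> boxidx q"
      show "k < n"
      proof (cases "n \<le> m")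
        case True
        then show ?thesis using k mB(2) s wB mn by (cases t) auto
      next
        case False
        then show ?thesis using k mB(2) s wB by (auto dest!: subsetD)
      qed
    qed
  qed
  have "hlog t (Imp (Imp (conj Q) A) (imps Q A))"
    using QA wQ wA by (intro hlog.tautI) (auto simp: taut_def peval_imps peval_conj wf_imps wf_conj)
  then have "hlog t (imps Q A)" using QA by (rule hlog.mp)
  then have "hlog t (Box n (imps Q A))"
    using bQ An by (intro hlog.nec) (auto simp: boxidx_imps)
  moreover have "wf (Box n (imps Q A))" using wQ wA bQ An by (auto simp: wf_imps boxidx_imps)
  ultimately have I: "hlog t (Imp C (Box n (imps Q A)))" using weaken wC by blast
  have memC: "hlog t (Imp C (Box m B))" if "(m, B) \<in> set ps" for m B
    using that wC a1 by (intro hlog.tautI) (auto simp: taut_def C_def peval_conj)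
  have qs: "\<forall>q\<in>set Q. hlog t (Imp C (Box n q))"
  proof
    fix q assume "q \<in> set Q"
    then obtain m B where mB: "(m, B) \<in> set ps" "q = tr t n (Box m B)" by (auto simp: Q_def)
    then have mn: "m \<le> n" and wB: "wf (Box m B)" using a1 a3 by auto
    have Bm: "\<forall>k\<in>boxidx B. k < m" using wB by simp
    show "hlog t (Imp C (Box n q))"
    proof (cases "m = n")
      case True
      show ?thesis
      proof (cases t)
        case True
        then have "q = B" using mB \<open>m = n\<close> tr_id[OF _ Bm] wB by simp
        then show ?thesis using memC[OF mB(1)] \<open>m = n\<close> by simp
      next
        case False
        then have "q = Top" using mB \<open>m = n\<close> by simp
        have "hlog t (Box n Top)" by (intro hlog.nec hlog.tautI) (auto simp: taut_def)
        then show ?thesis using \<open>q = Top\<close> weaken wC by auto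
      qed
    next
      case False
      then have mlt: "m < n" using mn by auto
      have "\<forall>k\<in>boxidx B. k < n" using Bm mlt by auto
      then have q: "q = Box m B" using mB tr_id[of B n t] wB mlt by auto
      have w4: "wf (Box n (Box m B))" using wB mlt by auto
      have f4: "hlog t (Imp (Box m B) (Box (Suc m) (Box m B)))"
        using wB by (intro hlog.ax4) auto
      have fH: "hlog t (Imp (Box (Suc m) (Box m B)) (Box n (Box m B)))"
        using mlt w4 by (intro Hchain) auto
      show ?thesis
      proof (rule prop_lem[where Xs = "[Box m B, Imp (Box m B) (Box (Suc m) (Box m B)),
              Imp (Box (Suc m) (Box m B)) (Box n (Box m B))]"])
        show "\<forall>X\<in>set [Box m B, Imp (Box m B) (Box (Suc m) (Box m B)),
              Imp (Box (Suc m) (Box m B)) (Box n (Box m B))]. wf X \<and> hlog t (Imp C X)"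
        proof -
          have bs: "\<forall>k\<in>boxidx B. k < Suc m" using wB by auto
          have "wf (Imp (Box m B) (Box (Suc m) (Box m B)))" "wf (Imp (Box (Suc m) (Box m B)) (Box n (Box m B)))"
            using wB w4 mlt by auto
          then show ?thesis using memC[OF mB(1)] weaken[OF f4 wC] weaken[OF fH wC] wB by auto
        qed
        show "taut (Imp (conj [Box m B, Imp (Box m B) (Box (Suc m) (Box m B)),
              Imp (Box (Suc m) (Box m B)) (Box n (Box m B))]) (Box n q))"
          using q by (auto simp: taut_def conj_def)
      qed (use wC w4 q in auto)
    qed
  qed
  have CB: "hlog t (Imp C (Box n A))"
    by (rule distrib[OF I qs wC]) (use wQ wA bQ An in \<open>auto simp: wf_imps boxidx_imps\<close>)
  have "hlog t (Imp (conj [C]) (Box n A))"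
  proof (rule hlog.mp[OF _ CB])
    show "hlog t (Imp (Imp C (Box n A)) (Imp (conj [C]) (Box n A)))"
      using wC a2 by (intro hlog.tautI) (auto simp: taut_def conj_def)
  qed
  then show ?thesis unfolding derives_def C_def[symmetric] by (intro exI[of _ "[C]"]) auto
qed

theorem theorem3p9:
  fixes ps :: "(nat \<times> fm) list" and n :: nat and A :: fm
  assumes "\<forall>(m, B) \<in> set ps. wf (Box m B)"
    and "wf (Box n A)"
    and "\<forall>(m, B) \<in> set ps. m \<le> n"
  shows "(derives K4h {conj (map (\<lambda>(m, B). Box m B) ps)} A
            \<longrightarrow> derives K4h {conj (map (\<lambda>(m, B). Box m B) ps)} (Box n A))
       \<and> (derives S4h {conj (map (\<lambda>(m, B). Box m B) ps)} A
            \<longrightarrow> derives S4h {conj (map (\<lambda>(m, B). Box m B) ps)} (Box n A))"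
  using main[OF assms] by blast

end
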